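(* Suppose Assumptions (A3) and (A6) hold and $\delta\in\big(0,\frac{1-e^{-\omega}}{2M}\big)$. Let $\alpha_0\in(0,\alpha]$ and $c_2\in(0,\infty)$ be such that $\int e^{\alpha_1D_1(z)}\theta(dz)\le e^{c_2\alpha_1}$ for all $\alpha_1\in[0,\alpha_0]$. Then $\kappa_1:=e^{-\omega}+2\delta M\in(0,1)$, and for all $\alpha_1\in[0,\alpha_0]$, $$\sup_{n\ge0}\int_{\mathbb{R}^d}e^{\alpha_1|x|}\mu_n(dx)\le\Big(\int e^{\alpha_1|x|}\mu_0(dx)\Big)\exp\Big\{\frac{c_2\alpha_1}{1-\kappa_1}\Big\}.$$
   Context: Fix integers $d,m\ge1$, a real $d\times d$ matrix $A$ with operator norm $\|A\|$, $\delta>0$, a Borel probability measure $\theta$ on $\mathbb{R}^m$ and a measurable $f:\mathbb{R}^d\times\mathcal{P}_1(\mathbb{R}^d)\times\mathbb{R}^m\to\mathbb{R}^d$. $\mathcal{P}_1(\mathbb{R}^d)$: Borel probability measures on $\mathbb{R}^d$ with finite first moment, with the Wasserstein-1 distance $\mathcal{W}_1(\mu,\nu)=\inf E|X-Y|$ over couplings. Nonlinear evolution: given $\mu_0\in\mathcal{P}_1(\mathbb{R}^d)$, $\mu_{n+1}=\Psi(\mu_n)$ where $\Psi(\mu)$ is the law of $AX+\delta f(X,\mu,\epsilon)$ with $(X,\epsilon)\sim\mu\otimes\theta$. $D(z):=\sup\frac{|f(x_1,\mu_1,z)-f(x_2,\mu_2,z)|}{|x_1-x_2|+\mathcal{W}_1(\mu_1,\mu_2)}$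 (supremum over $(x_1,\mu_1)\neq(x_2,\mu_2)$), $D_1(z):=|f(0,\delta_0,z)|$. (A3): $\|A\|\le e^{-\omega}$ for some $\omega>0$. (A6): (i) for some $M\in(1,\infty)$, $D(z)\le M$ for $\theta$-a.e. $z$; (ii) there is $\alpha>0$ with $\int e^{\alpha|x|}\mu_0(dx)<\infty$ and $\int e^{\alpha D_1(z)}\theta(dz)<\infty$. *)

theory Defs
  imports "HOL-Probability.Probability"
begin

definition P1 :: "(real^'n) measure \<Rightarrow> bool" where
  "P1 \<mu> \<longleftrightarrow> prob_space \<mu> \<and> sets \<mu> = sets borel \<and> integrable \<mu> (\<lambda>x. norm x)"

definition coupling :: "(real^'n) measure \<Rightarrow> (real^'n) measure \<Rightarrow> ((real^'n) \<times> (real^'n)) measure \<Rightarrow> bool" where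
  "coupling \<mu> \<nu> \<pi> \<longleftrightarrow> prob_space \<pi> \<and> sets \<pi> = sets (borel \<Otimes>\<^sub>M borel)
     \<and> distr \<pi> borel fst = \<mu> \<and> distr \<pi> borel snd = \<nu>"

definition W1 :: "(real^'n) measure \<Rightarrow> (real^'n) measure \<Rightarrow> real" where
  "W1 \<mu> \<nu> = Inf {(\<integral>p. norm (fst p - snd p) \<partial>\<pi>) | \<pi>. coupling \<mu> \<nu> \<pi>}"

definition Psi :: "real^'n^'n \<Rightarrow> real \<Rightarrow> (real^'n \<Rightarrow> (real^'n) measure \<Rightarrow> real^'m \<Rightarrow> real^'n)
     \<Rightarrow> (real^'m) measure \<Rightarrow> (real^'n) measure \<Rightarrow> (real^'n) measure" where
  "Psi A \<delta> f \<theta> \<mu> = distr (\<mu> \<Otimes>\<^sub>M \<theta>) borel (\<lambda>(x, z). A *v x + \<delta> *\<^sub>R f x \<mu> z)"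

definition Dlip :: "(real^'n \<Rightarrow> (real^'n) measure \<Rightarrow> real^'m \<Rightarrow> real^'n) \<Rightarrow> real^'m \<Rightarrow> ereal" where
  "Dlip f z = (SUP p \<in> {((x1, \<mu>1), (x2, \<mu>2)). P1 \<mu>1 \<and> P1 \<mu>2 \<and> (x1, \<mu>1) \<noteq> (x2, \<mu>2)}.
      (case p of ((x1, \<mu>1), (x2, \<mu>2)) \<Rightarrow>
        ereal (norm (f x1 \<mu>1 z - f x2 \<mu>2 z) / (norm (x1 - x2) + W1 \<mu>1 \<mu>2))))"

definition D1 :: "(real^'n \<Rightarrow> (real^'n) measure \<Rightarrow> real^'m \<Rightarrow> real^'n) \<Rightarrow> real^'m \<Rightarrow> real" where
  "D1 f z = norm (f 0 (return borel 0) z)"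

end

theory Submission
  imports Defs
begin


lemma coupling_prod:
  fixes \<mu> \<nu> :: "(real^'n) measure"
  assumes "P1 \<mu>" "P1 \<nu>"
  shows "coupling \<mu> \<nu> (\<mu> \<Otimes>\<^sub>M \<nu>)"
proof -
  have p: "prob_space \<mu>" "prob_space \<nu>" and s: "sets \<mu> = sets borel" "sets \<nu> = sets borel"
    using assms by (auto simp: P1_def)
  interpret pair_prob_space \<mu> \<nu> using p by (simp add: pair_prob_space_def pair_sigma_finite_def prob_space_imp_sigma_finite)
  have "distr (\<mu> \<Otimes>\<^sub>M \<nu>) borel fst = distr (\<mu> \<Otimes>\<^sub>M \<nu>) \<mu> fst"
    by (rule distr_cong) (auto simp: s)
  also have "\<dots> = \<mu>" using prob_space.distr_pair_fst[OF p(2)] .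
  finally have 1: "distr (\<mu> \<Otimes>\<^sub>M \<nu>) borel fst = \<mu>" .
  have "distr (\<mu> \<Otimes>\<^sub>M \<nu>) borel snd = distr (\<mu> \<Otimes>\<^sub>M \<nu>) \<nu> snd"
    by (rule distr_cong) (auto simp: s)
  also have "\<dots> = \<nu>"
  proof (intro measure_eqI)
    fix A assume A: "A \<in> sets (distr (\<mu> \<Otimes>\<^sub>M \<nu>) \<nu> snd)"
    then have "emeasure (distr (\<mu> \<Otimes>\<^sub>M \<nu>) \<nu> snd) A = emeasure (\<mu> \<Otimes>\<^sub>M \<nu>) (space \<mu> \<times> A)"
      by (auto simp add: emeasure_distr space_pair_measure dest: sets.sets_into_space intro!: arg_cong2[where f=emeasure])
    with A show "emeasure (distr (\<mu> \<Otimes>\<^sub>M \<nu>) \<nu> snd) A = emeasure \<nu> A"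
      using M2.emeasure_pair_measure_Times[OF sets.top[of \<mu>], of A] by (simp add: M1.emeasure_space_1)
  qed simp
  finally have 2: "distr (\<mu> \<Otimes>\<^sub>M \<nu>) borel snd = \<nu>" .
  show ?thesis unfolding coupling_def using 1 2 prob_space_pair[OF p] sets_pair_measure_cong[OF s]
    by simp
qed

lemma W1_bounds:
  fixes \<mu> \<nu> :: "(real^'n) measure"
  assumes "P1 \<mu>" "P1 \<nu>"
  shows "0 \<le> W1 \<mu> \<nu>" "W1 \<mu> \<nu> \<le> (\<integral>x. norm x \<partial>\<mu>) + (\<integral>x. norm x \<partial>\<nu>)"
proof -
  have p: "prob_space \<mu>" "prob_space \<nu>" and s: "sets \<mu> = sets borel" "sets \<nu> = sets borel"
    and i: "integrable \<mu> (\<lambda>x. norm x)" "integrable \<nu> (\<lambda>x. norm x)"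
    using assms by (auto simp: P1_def)
  interpret pair_prob_space \<mu> \<nu> using p by (simp add: pair_prob_space_def pair_sigma_finite_def prob_space_imp_sigma_finite)
  let ?S = "{(\<integral>p. norm (fst p - snd p) \<partial>\<pi>) | \<pi>. coupling \<mu> \<nu> \<pi>}"
  have c: "coupling \<mu> \<nu> (\<mu> \<Otimes>\<^sub>M \<nu>)" by (rule coupling_prod[OF assms])
  have ne: "?S \<noteq> {}" using c by blast
  have bdd: "bdd_below ?S" by (rule bdd_belowI[of _ 0]) auto
  show "0 \<le> W1 \<mu> \<nu>" unfolding W1_def by (rule cInf_greatest[OF ne]) auto
  have mf[measurable]: "(\<lambda>x::real^'n. norm x) \<in> borel_measurable \<mu>" "(\<lambda>x::real^'n. norm x) \<in> borel_measurable \<nu>"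
    by (subst measurable_cong_sets[OF s(1) refl], simp) (subst measurable_cong_sets[OF s(2) refl], simp)
  have "(\<integral>\<^sup>+p. ennreal (norm (fst p - snd p)) \<partial>(\<mu> \<Otimes>\<^sub>M \<nu>))
      \<le> (\<integral>\<^sup>+p. ennreal (norm (fst p)) + ennreal (norm (snd p)) \<partial>(\<mu> \<Otimes>\<^sub>M \<nu>))"
    by (intro nn_integral_mono) (metis ennreal_leI ennreal_plus norm_ge_zero norm_triangle_ineq4)
  also have "\<dots> = (\<integral>\<^sup>+p. ennreal (norm (fst p)) \<partial>(\<mu> \<Otimes>\<^sub>M \<nu>)) + (\<integral>\<^sup>+p. ennreal (norm (snd p)) \<partial>(\<mu> \<Otimes>\<^sub>M \<nu>))"
    by (intro nn_integral_add) auto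
  also have "(\<integral>\<^sup>+p. ennreal (norm (fst p)) \<partial>(\<mu> \<Otimes>\<^sub>M \<nu>)) = (\<integral>\<^sup>+x. ennreal (norm x) \<partial>\<mu>)"
    by (subst M2.nn_integral_fst[symmetric]) (auto simp: M2.emeasure_space_1)
  also have "(\<integral>\<^sup>+p. ennreal (norm (snd p)) \<partial>(\<mu> \<Otimes>\<^sub>M \<nu>)) = (\<integral>\<^sup>+x. ennreal (norm x) \<partial>\<nu>)"
    by (subst M2.nn_integral_fst[symmetric]) (auto simp: M1.emeasure_space_1)
  also have "(\<integral>\<^sup>+x. ennreal (norm x) \<partial>\<mu>) = ennreal (\<integral>x. norm x \<partial>\<mu>)"
    by (rule nn_integral_eq_integral[OF i(1)]) auto
  also have "(\<integral>\<^sup>+x. ennreal (norm x) \<partial>\<nu>) = ennreal (\<integral>x. norm x \<partial>\<nu>)"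
    by (rule nn_integral_eq_integral[OF i(2)]) auto
  finally have "(\<integral>\<^sup>+p. ennreal (norm (fst p - snd p)) \<partial>(\<mu> \<Otimes>\<^sub>M \<nu>)) \<le> ennreal ((\<integral>x. norm x \<partial>\<mu>) + (\<integral>x. norm x \<partial>\<nu>))"
    by (simp add: ennreal_plus integral_nonneg_AE)
  then have "(\<integral>p. norm (fst p - snd p) \<partial>(\<mu> \<Otimes>\<^sub>M \<nu>)) \<le> (\<integral>x. norm x \<partial>\<mu>) + (\<integral>x. norm x \<partial>\<nu>)"
    by (intro integral_real_bounded) (auto intro!: add_nonneg_nonneg integral_nonneg_AE)
  moreover have "W1 \<mu> \<nu> \<le> (\<integral>p. norm (fst p - snd p) \<partial>(\<mu> \<Otimes>\<^sub>M \<nu>))"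
    unfolding W1_def by (rule cInf_lower[OF _ bdd]) (use c in blast)
  ultimately show "W1 \<mu> \<nu> \<le> (\<integral>x. norm x \<partial>\<mu>) + (\<integral>x. norm x \<partial>\<nu>)" by linarith
qed

lemma P1_return0: "P1 (return borel (0::real^'n))"
  unfolding P1_def
  by (auto intro!: prob_space_return integrableI_bounded simp: nn_integral_return)

lemma int_return0: "(\<integral>x. norm x \<partial>return borel (0::real^'n)) = 0"
  by (simp add: integral_return)



lemma f_bound:
  fixes f :: "real^'n \<Rightarrow> (real^'n) measure \<Rightarrow> real^'m \<Rightarrow> real^'n"
  assumes D: "Dlip f z \<le> ereal M" and M: "M > 0" and mu: "P1 \<mu>"
  shows "norm (f x \<mu> z) \<le> D1 f z + M * (norm x + (\<integral>y. norm y \<partial>\<mu>))"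
proof -
  define d0 where "d0 = return borel (0::real^'n)"
  have Pd0: "P1 d0" unfolding d0_def by (rule P1_return0)
  have H: "norm (f x1 \<mu>1 z - f x2 \<mu>2 z) \<le> M * (norm (x1 - x2) + W1 \<mu>1 \<mu>2)"
    if "P1 \<mu>1" "P1 \<mu>2" "(x1, \<mu>1) \<noteq> (x2, \<mu>2)" "0 < norm (x1 - x2) + W1 \<mu>1 \<mu>2" for x1 x2 \<mu>1 \<mu>2
  proof -
    have "ereal (norm (f x1 \<mu>1 z - f x2 \<mu>2 z) / (norm (x1 - x2) + W1 \<mu>1 \<mu>2)) \<le> Dlip f z"
      unfolding Dlip_def by (rule SUP_upper2[of "((x1, \<mu>1), (x2, \<mu>2))"]) (use that in auto)
    from order.trans[OF this D] have "norm (f x1 \<mu>1 z - f x2 \<mu>2 z) / (norm (x1 - x2) + W1 \<mu>1 \<mu>2) \<le> M" by simp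
    with that(4) show ?thesis by (simp add: divide_le_eq mult.commute)
  qed
  have m0: "0 \<le> (\<integral>y. norm y \<partial>\<mu>)" by (rule integral_nonneg_AE) auto
  have Wd: "W1 \<mu> d0 \<le> (\<integral>y. norm y \<partial>\<mu>)" "0 \<le> W1 \<mu> d0"
    using W1_bounds[OF mu Pd0] by (auto simp: d0_def int_return0)
  have Wdd: "W1 d0 d0 \<le> 0" "0 \<le> W1 d0 d0" using W1_bounds[OF Pd0 Pd0] by (auto simp: d0_def int_return0)
  have key: "norm (f x \<mu> z - f 0 d0 z) \<le> M * (norm x + (\<integral>y. norm y \<partial>\<mu>))"
  proof (cases "(x, \<mu>) = (0, d0)")
    case True then show ?thesis using M m0 by simp
  next
    case ne: False
    show ?thesis
    proof (cases "0 < norm x + W1 \<mu> d0")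
      case True
      have "norm (f x \<mu> z - f 0 d0 z) \<le> M * (norm (x - 0) + W1 \<mu> d0)"
        by (rule H[OF mu Pd0 ne]) (use True in simp)
      also have "\<dots> \<le> M * (norm x + (\<integral>y. norm y \<partial>\<mu>))"
        using Wd M by (intro mult_left_mono) auto
      finally show ?thesis .
    next
      case False
      have nx: "norm x = 0" and W0: "W1 \<mu> d0 = 0" using False Wd(2) norm_ge_zero[of x] by linarith+
      then have x0: "x = 0" by simp
      have "norm (f 0 \<mu> z - f 0 d0 z) \<le> 2 * M * e" if e: "e > 0" for e
      proof -
        obtain v :: "real^'n" where v: "norm v = e" using vector_choose_size[of e] e by auto
        have vne: "v \<noteq> 0" using v e by auto
        have 1: "norm (f 0 \<mu> z - f v d0 z) \<le> M * (norm (0 - v) + W1 \<mu> d0)"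
          by (rule H[OF mu Pd0]) (use vne W0 v e in auto)
        have 2: "norm (f v d0 z - f 0 d0 z) \<le> M * (norm (v - 0) + W1 d0 d0)"
          by (rule H[OF Pd0 Pd0]) (use vne Wdd v e in auto)
        have "norm (f 0 \<mu> z - f 0 d0 z) \<le> norm (f 0 \<mu> z - f v d0 z) + norm (f v d0 z - f 0 d0 z)"
          using norm_triangle_ineq[of "f 0 \<mu> z - f v d0 z" "f v d0 z - f 0 d0 z"] by simp
        also have "\<dots> \<le> M * e + M * e" using 1 2 W0 Wdd v M by (auto intro!: add_mono)
        finally show ?thesis by simp
      qed
      then have "norm (f 0 \<mu> z - f 0 d0 z) \<le> 0"
      proof -
        assume h: "\<And>e. e > 0 \<Longrightarrow> norm (f 0 \<mu> z - f 0 d0 z) \<le> 2 * M * e"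
        show ?thesis
        proof (rule ccontr)
          assume "\<not> ?thesis"
          then have p: "norm (f 0 \<mu> z - f 0 d0 z) > 0" by simp
          have "norm (f 0 \<mu> z - f 0 d0 z) \<le> 2 * M * (norm (f 0 \<mu> z - f 0 d0 z) / (4 * M))"
            using h[of "norm (f 0 \<mu> z - f 0 d0 z) / (4 * M)"] p M by auto
          also have "\<dots> = norm (f 0 \<mu> z - f 0 d0 z) / 2" using M by (simp add: field_simps)
          finally show False using p by simp
        qed
      qed
      then show ?thesis using x0 M m0 by (simp add: zero_le_mult_iff)
    qed
  qed
  have "norm (f x \<mu> z) \<le> norm (f 0 d0 z) + norm (f x \<mu> z - f 0 d0 z)"
    by (metis norm_triangle_sub)
  also have "norm (f 0 d0 z) = D1 f z" by (simp add: D1_def d0_def)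
  finally show ?thesis using key by linarith
qed



lemma exp_jensen:
  fixes X :: "'a \<Rightarrow> real"
  assumes P: "prob_space M" and X: "integrable M X" and a: "0 \<le> a"
    and E: "integrable M (\<lambda>x. exp (a * X x))"
  shows "exp (a * (\<integral>x. X x \<partial>M)) \<le> (\<integral>x. exp (a * X x) \<partial>M)"
proof -
  interpret prob_space M by (rule P)
  define c where "c = (\<integral>x. exp (a * X x) \<partial>M)"
  have "(\<integral>x. 0 \<partial>M) < c" unfolding c_def
    by (intro integral_less_AE_space) (auto simp: E emeasure_space_1)
  then have c: "0 < c" by simp
  have pw: "a * X x - ln c \<le> exp (a * X x) / c - 1" for x
  proof -
    have "ln (exp (a * X x) / c) \<le> exp (a * X x) / c - 1" by (rule ln_le_minus_one) (use c in simp)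
    also have "ln (exp (a * X x) / c) = a * X x - ln c" using c by (simp add: ln_div)
    finally show ?thesis .
  qed
  have "(\<integral>x. a * X x - ln c \<partial>M) \<le> (\<integral>x. exp (a * X x) / c - 1 \<partial>M)"
    by (intro integral_mono) (use X E pw in auto)
  also have "(\<integral>x. a * X x - ln c \<partial>M) = a * (\<integral>x. X x \<partial>M) - ln c"
    using X by (simp add: prob_space)
  also have "(\<integral>x. exp (a * X x) / c - 1 \<partial>M) = c / c - 1"
    using E by (simp add: prob_space c_def)
  finally have "a * (\<integral>x. X x \<partial>M) \<le> ln c" using c by simp
  then have e: "exp (a * (\<integral>x. X x \<partial>M)) \<le> exp (ln c)" by (simp only: exp_le_cancel_iff)
  have "exp (ln c) = c" using c by simp
  with e have "exp (a * (\<integral>x. X x \<partial>M)) \<le> c" by simp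
  then show ?thesis by (simp only: c_def)
qed

lemma pow_jensen:
  fixes g :: "'a \<Rightarrow> real"
  assumes P: "prob_space M" and g: "integrable M g" and g1: "\<And>x. x \<in> space M \<Longrightarrow> 1 \<le> g x"
    and t: "0 \<le> t" "t \<le> 1"
  shows "integrable M (\<lambda>x. g x powr t)" "(\<integral>x. g x powr t \<partial>M) \<le> (\<integral>x. g x \<partial>M) powr t"
proof -
  interpret prob_space M by (rule P)
  have gm[measurable]: "g \<in> borel_measurable M" using g by auto
  show I: "integrable M (\<lambda>x. g x powr t)"
  proof (rule Bochner_Integration.integrable_bound[OF g])
    show "(\<lambda>x. g x powr t) \<in> borel_measurable M" by measurable
    show "AE x in M. norm (g x powr t) \<le> norm (g x)"
    proof (rule AE_I2)
      fix x assume x: "x \<in> space M"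
      have "g x powr t \<le> g x powr 1" using g1[OF x] t by (intro powr_mono) auto
      then show "norm (g x powr t) \<le> norm (g x)" using g1[OF x] by simp
    qed
  qed
  define c where "c = (\<integral>x. g x \<partial>M)"
  have "(\<integral>x. 1 \<partial>M) \<le> c" unfolding c_def by (intro integral_mono) (use g g1 in auto)
  then have c: "1 \<le> c" by (simp add: prob_space)
  have pw: "g x powr t \<le> c powr t * (t * (g x / c) + (1 - t))" if x: "x \<in> space M" for x
  proof -
    have gx: "0 < g x" using g1[OF x] by simp
    have "(g x / c) powr t * 1 powr (1 - t) \<le> t * (g x / c) + (1 - t) * 1"
      by (rule Youngs_inequality_0) (use t gx c in auto)
    then have y: "(g x / c) powr t \<le> t * (g x / c) + (1 - t)" by simp
    have "g x powr t = c powr t * (g x / c) powr t" using gx c by (simp add: powr_divide)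
    also have "\<dots> \<le> c powr t * (t * (g x / c) + (1 - t))" using y c by (intro mult_left_mono) auto
    finally show ?thesis .
  qed
  have "(\<integral>x. g x powr t \<partial>M) \<le> (\<integral>x. c powr t * (t * (g x / c) + (1 - t)) \<partial>M)"
    by (intro integral_mono I) (use g pw in auto)
  also have "\<dots> = c powr t * (t * (c / c) + (1 - t))"
    using g by (simp add: prob_space c_def)
  also have "\<dots> = c powr t" using c by simp
  finally show "(\<integral>x. g x powr t \<partial>M) \<le> (\<integral>x. g x \<partial>M) powr t" by (simp add: c_def)
qed



lemma exp_powr_eq: "exp (a::real) powr t = exp (t * a)"
  by (simp add: powr_def)

context
  fixes A :: "real^'n^'n" and \<delta> \<omega> M \<alpha>z cc :: real and \<theta> :: "(real^'m) measure"
    and f :: "real^'n \<Rightarrow> (real^'n) measure \<Rightarrow> real^'m \<Rightarrow> real^'n"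
  assumes theta: "prob_space \<theta>" "sets \<theta> = sets borel"
    and f_meas: "\<And>\<mu>. P1 \<mu> \<Longrightarrow> (\<lambda>(x, z). f x \<mu> z) \<in> borel_measurable (borel \<Otimes>\<^sub>M borel)"
    and onA: "onorm ((*v) A) \<le> exp (- \<omega>)"
    and Dl: "AE z in \<theta>. Dlip f z \<le> ereal M"
    and Mpos: "M > 0" and dpos: "\<delta> > 0" and d1: "\<delta> \<le> 1" and kap: "exp (- \<omega>) + \<delta> * M \<le> 1"
    and hc2: "\<And>\<alpha>1. 0 \<le> \<alpha>1 \<Longrightarrow> \<alpha>1 \<le> \<alpha>z \<Longrightarrow>
       (\<integral>\<^sup>+ z. ennreal (exp (\<alpha>1 * D1 f z)) \<partial>\<theta>) \<le> ennreal (exp (cc * \<alpha>1))"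
begin

lemma h_meas:
  assumes mu: "P1 \<mu>"
  shows "(\<lambda>(x, z). A *v x + \<delta> *\<^sub>R f x \<mu> z) \<in> borel_measurable (\<mu> \<Otimes>\<^sub>M \<theta>)"
proof -
  have s\<mu>: "sets \<mu> = sets borel" using mu by (auto simp: P1_def)
  have sS: "sets (\<mu> \<Otimes>\<^sub>M \<theta>) = sets (borel \<Otimes>\<^sub>M borel)" by (rule sets_pair_measure_cong[OF s\<mu> theta(2)])
  have fm[measurable]: "(\<lambda>(x, z). f x \<mu> z) \<in> borel_measurable (\<mu> \<Otimes>\<^sub>M \<theta>)"
    by (subst measurable_cong_sets[OF sS refl]) (rule f_meas[OF mu])
  have Am[measurable]: "(\<lambda>x. A *v x) \<in> borel_measurable borel"
    by (intro borel_measurable_continuous_onI linear_continuous_on) simp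
  have fstm: "fst \<in> measurable (\<mu> \<Otimes>\<^sub>M \<theta>) borel"
    by (subst measurable_cong_sets[OF sS refl]) simp
  have "(\<lambda>p. A *v fst p + \<delta> *\<^sub>R (\<lambda>(x, z). f x \<mu> z) p) \<in> borel_measurable (\<mu> \<Otimes>\<^sub>M \<theta>)"
    using measurable_compose[OF fstm Am] fm by measurable
  moreover have "(\<lambda>p. A *v fst p + \<delta> *\<^sub>R (\<lambda>(x, z). f x \<mu> z) p) = (\<lambda>(x, z). A *v x + \<delta> *\<^sub>R f x \<mu> z)"
    by auto
  ultimately show ?thesis by simp
qed

lemma Psi_P:
  assumes mu: "P1 \<mu>"
  shows "prob_space (Psi A \<delta> f \<theta> \<mu>)" "sets (Psi A \<delta> f \<theta> \<mu>) = sets borel"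
proof -
  have "prob_space (\<mu> \<Otimes>\<^sub>M \<theta>)" using mu theta by (intro prob_space_pair) (auto simp: P1_def)
  then show "prob_space (Psi A \<delta> f \<theta> \<mu>)" unfolding Psi_def
    by (intro prob_space.prob_space_distr h_meas mu)
  show "sets (Psi A \<delta> f \<theta> \<mu>) = sets borel" unfolding Psi_def by simp
qed

lemma D1_meas: "(\<lambda>z. D1 f z) \<in> borel_measurable \<theta>"
proof -
  have pm: "(\<lambda>z. (0::real^'n, z)) \<in> measurable \<theta> (borel \<Otimes>\<^sub>M borel)"
    by (intro measurable_Pair measurable_const) (auto intro: measurable_ident_sets[OF theta(2)])
  have "(\<lambda>z. (\<lambda>(x, z). f x (return borel 0) z) (0::real^'n, z)) \<in> borel_measurable \<theta>"
    by (rule measurable_compose[OF pm f_meas[OF P1_return0]])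
  then show ?thesis unfolding D1_def by simp
qed


lemma step:
  assumes mu: "P1 \<mu>" and a: "0 \<le> \<alpha>1" "\<alpha>1 \<le> \<alpha>z"
    and fin: "(\<integral>\<^sup>+x. ennreal (exp (\<alpha>1 * norm x)) \<partial>\<mu>) < \<infinity>"
  shows "(\<integral>\<^sup>+x. ennreal (exp (\<alpha>1 * norm x)) \<partial>Psi A \<delta> f \<theta> \<mu>)
     \<le> ennreal ((\<integral>x. exp (\<alpha>1 * norm x) \<partial>\<mu>) powr (exp (- \<omega>) + 2 * \<delta> * M) * exp (cc * (\<alpha>1 * \<delta>)))"
proof -
  have p\<mu>: "prob_space \<mu>" and s\<mu>: "sets \<mu> = sets borel" and inorm: "integrable \<mu> (\<lambda>x. norm x)"
    using mu by (auto simp: P1_def)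
  interpret th: prob_space \<theta> by (rule theta(1))
  interpret mu: prob_space \<mu> by (rule p\<mu>)
  define kp where "kp = exp (- \<omega>) + \<delta> * M"
  define m where "m = (\<integral>x. norm x \<partial>\<mu>)"
  define K where "K = exp (\<alpha>1 * \<delta> * M * m) * exp (cc * (\<alpha>1 * \<delta>))"
  define ell where "ell = (\<integral>x. exp (\<alpha>1 * norm x) \<partial>\<mu>)"
  have kp: "0 \<le> kp" "kp \<le> 1" using kap Mpos dpos by (auto simp: kp_def intro!: add_nonneg_nonneg)
  have m0: "0 \<le> m" unfolding m_def by (rule integral_nonneg_AE) auto
  have normm[measurable]: "(\<lambda>x::real^'n. norm x) \<in> borel_measurable \<mu>"
    by (subst measurable_cong_sets[OF s\<mu> refl]) simp
  have gm[measurable]: "(\<lambda>x::real^'n. exp (\<alpha>1 * norm x)) \<in> borel_measurable \<mu>" by measurable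
  have ig: "integrable \<mu> (\<lambda>x. exp (\<alpha>1 * norm x))"
    by (rule integrableI_bounded) (use fin in simp_all)
  have hm: "(\<lambda>(x, z). A *v x + \<delta> *\<^sub>R f x \<mu> z) \<in> borel_measurable (\<mu> \<Otimes>\<^sub>M \<theta>)" by (rule h_meas[OF mu])
  have hm2: "(\<lambda>p. ennreal (exp (\<alpha>1 * norm ((\<lambda>(x, z). A *v x + \<delta> *\<^sub>R f x \<mu> z) p)))) \<in> borel_measurable (\<mu> \<Otimes>\<^sub>M \<theta>)"
    using hm by measurable
  have D1m[measurable]: "(\<lambda>z. D1 f z) \<in> borel_measurable \<theta>" by (rule D1_meas)
  have inner: "(\<integral>\<^sup>+z. ennreal (exp (\<alpha>1 * norm (A *v x + \<delta> *\<^sub>R f x \<mu> z))) \<partial>\<theta>)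
      \<le> ennreal (exp (\<alpha>1 * norm x) powr kp * K)" for x
  proof -
    have "(\<integral>\<^sup>+z. ennreal (exp (\<alpha>1 * norm (A *v x + \<delta> *\<^sub>R f x \<mu> z))) \<partial>\<theta>)
        \<le> (\<integral>\<^sup>+z. ennreal (exp (\<alpha>1 * (kp * norm x + \<delta> * M * m))) * ennreal (exp ((\<alpha>1 * \<delta>) * D1 f z)) \<partial>\<theta>)"
    proof (rule nn_integral_mono_AE)
      show "AE z in \<theta>. ennreal (exp (\<alpha>1 * norm (A *v x + \<delta> *\<^sub>R f x \<mu> z)))
          \<le> ennreal (exp (\<alpha>1 * (kp * norm x + \<delta> * M * m))) * ennreal (exp ((\<alpha>1 * \<delta>) * D1 f z))"
        using Dl
      proof eventually_elim
        case (elim z)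
        have fb: "norm (f x \<mu> z) \<le> D1 f z + M * (norm x + m)"
          unfolding m_def by (rule f_bound[OF elim Mpos mu])
        have Ax: "norm (A *v x) \<le> exp (- \<omega>) * norm x"
          using onorm[OF matrix_vector_mul_bounded_linear[of A], of x] onA
          by (meson mult_right_mono norm_ge_zero order_trans)
        have "norm (A *v x + \<delta> *\<^sub>R f x \<mu> z) \<le> norm (A *v x) + \<delta> * norm (f x \<mu> z)"
          using norm_triangle_ineq[of "A *v x" "\<delta> *\<^sub>R f x \<mu> z"] dpos by simp
        also have "\<dots> \<le> exp (- \<omega>) * norm x + \<delta> * (D1 f z + M * (norm x + m))"
          using Ax fb dpos by (intro add_mono mult_left_mono) auto
        also have "\<dots> = (kp * norm x + \<delta> * M * m) + \<delta> * D1 f z"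
          by (simp add: kp_def algebra_simps)
        finally have "\<alpha>1 * norm (A *v x + \<delta> *\<^sub>R f x \<mu> z) \<le> \<alpha>1 * (kp * norm x + \<delta> * M * m) + (\<alpha>1 * \<delta>) * D1 f z"
          using a by (simp add: mult_left_mono distrib_left[symmetric] mult.assoc)
        then have "exp (\<alpha>1 * norm (A *v x + \<delta> *\<^sub>R f x \<mu> z)) \<le> exp (\<alpha>1 * (kp * norm x + \<delta> * M * m)) * exp ((\<alpha>1 * \<delta>) * D1 f z)"
          by (simp add: exp_add[symmetric])
        then show ?case by (simp add: ennreal_mult[symmetric] ennreal_leI)
      qed
    qed
    also have "\<dots> = ennreal (exp (\<alpha>1 * (kp * norm x + \<delta> * M * m))) * (\<integral>\<^sup>+z. ennreal (exp ((\<alpha>1 * \<delta>) * D1 f z)) \<partial>\<theta>)"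
      by (rule nn_integral_cmult) measurable
    also have "\<dots> \<le> ennreal (exp (\<alpha>1 * (kp * norm x + \<delta> * M * m))) * ennreal (exp (cc * (\<alpha>1 * \<delta>)))"
      using a d1 dpos by (intro mult_left_mono hc2) (auto simp: mult_nonneg_nonneg intro: order_trans[OF mult_left_le])
    also have "\<dots> = ennreal (exp (\<alpha>1 * norm x) powr kp * K)"
      by (simp add: K_def exp_powr_eq ennreal_mult[symmetric] exp_add[symmetric] algebra_simps)
    finally show ?thesis .
  qed
  have pj: "integrable \<mu> (\<lambda>x. exp (\<alpha>1 * norm x) powr kp)" "(\<integral>x. exp (\<alpha>1 * norm x) powr kp \<partial>\<mu>) \<le> ell powr kp"
    using pow_jensen[OF p\<mu> ig _ kp] a unfolding ell_def by auto
  have ej: "exp (\<alpha>1 * m) \<le> ell" unfolding m_def ell_def by (rule exp_jensen[OF p\<mu> inorm a(1) ig])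
  have l1: "1 \<le> ell" using ej a m0 by (meson dual_order.trans one_le_exp_iff zero_le_mult_iff)
  have "(\<integral>\<^sup>+x. ennreal (exp (\<alpha>1 * norm x)) \<partial>Psi A \<delta> f \<theta> \<mu>)
      = (\<integral>\<^sup>+p. ennreal (exp (\<alpha>1 * norm ((\<lambda>(x, z). A *v x + \<delta> *\<^sub>R f x \<mu> z) p))) \<partial>(\<mu> \<Otimes>\<^sub>M \<theta>))"
    unfolding Psi_def by (rule nn_integral_distr[OF hm]) measurable
  also have "\<dots> = (\<integral>\<^sup>+x. \<integral>\<^sup>+z. ennreal (exp (\<alpha>1 * norm (A *v x + \<delta> *\<^sub>R f x \<mu> z))) \<partial>\<theta> \<partial>\<mu>)"
    using th.nn_integral_fst[OF hm2, symmetric] by simp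
  also have "\<dots> \<le> (\<integral>\<^sup>+x. ennreal (exp (\<alpha>1 * norm x) powr kp * K) \<partial>\<mu>)"
    by (intro nn_integral_mono inner)
  also have "\<dots> = ennreal (\<integral>x. exp (\<alpha>1 * norm x) powr kp * K \<partial>\<mu>)"
    by (rule nn_integral_eq_integral) (use pj(1) in \<open>auto simp: K_def\<close>)
  also have "(\<integral>x. exp (\<alpha>1 * norm x) powr kp * K \<partial>\<mu>) = (\<integral>x. exp (\<alpha>1 * norm x) powr kp \<partial>\<mu>) * K"
    by simp
  also have "\<dots> \<le> ell powr kp * K" using pj(2) by (intro mult_right_mono) (auto simp: K_def)
  also have "K \<le> ell powr (\<delta> * M) * exp (cc * (\<alpha>1 * \<delta>))"
  proof -
    have "exp (\<alpha>1 * \<delta> * M * m) = exp (\<alpha>1 * m) powr (\<delta> * M)" by (simp add: exp_powr_eq algebra_simps)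
    also have "\<dots> \<le> ell powr (\<delta> * M)" using ej dpos Mpos by (intro powr_mono2) auto
    finally show ?thesis unfolding K_def by (intro mult_right_mono) auto
  qed
  then have "ell powr kp * K \<le> ell powr kp * (ell powr (\<delta> * M) * exp (cc * (\<alpha>1 * \<delta>)))"
    by (intro mult_left_mono) auto
  also have "\<dots> = ell powr (exp (- \<omega>) + 2 * \<delta> * M) * exp (cc * (\<alpha>1 * \<delta>))"
    using l1 by (simp add: kp_def powr_add[symmetric] algebra_simps)
  finally show ?thesis unfolding ell_def by (simp add: ennreal_leI)
qed

end




lemma Lconv:
  fixes \<mu> :: "(real^'n) measure"
  assumes s: "sets \<mu> = sets borel" and fin: "(\<integral>\<^sup>+x. ennreal (exp (a * norm x)) \<partial>\<mu>) < \<infinity>"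
  shows "integrable \<mu> (\<lambda>x. exp (a * norm x))"
    "(\<integral>\<^sup>+x. ennreal (exp (a * norm x)) \<partial>\<mu>) = ennreal (\<integral>x. exp (a * norm x) \<partial>\<mu>)"
proof -
  have [measurable]: "(\<lambda>x::real^'n. norm x) \<in> borel_measurable \<mu>"
    by (subst measurable_cong_sets[OF s refl]) simp
  show i: "integrable \<mu> (\<lambda>x. exp (a * norm x))"
    by (rule integrableI_bounded) (use fin in simp_all)
  show "(\<integral>\<^sup>+x. ennreal (exp (a * norm x)) \<partial>\<mu>) = ennreal (\<integral>x. exp (a * norm x) \<partial>\<mu>)"
    by (rule nn_integral_eq_integral[OF i]) auto
qed

lemma P1_from_exp:
  fixes \<mu> :: "(real^'n) measure"
  assumes p: "prob_space \<mu>" and s: "sets \<mu> = sets borel" and a: "a > 0"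
    and fin: "(\<integral>\<^sup>+x. ennreal (exp (a * norm x)) \<partial>\<mu>) < \<infinity>"
  shows "P1 \<mu>"
proof -
  have [measurable]: "(\<lambda>x::real^'n. norm x) \<in> borel_measurable \<mu>"
    by (subst measurable_cong_sets[OF s refl]) simp
  have "(\<integral>\<^sup>+x. ennreal (norm (norm x)) \<partial>\<mu>) \<le> (\<integral>\<^sup>+x. ennreal (1 / a) * ennreal (exp (a * norm x)) \<partial>\<mu>)"
  proof (intro nn_integral_mono)
    fix x :: "real^'n"
    have "a * norm x \<le> exp (a * norm x)"
      using exp_ge_add_one_self[of "a * norm x"] by linarith
    then have "norm x \<le> 1 / a * exp (a * norm x)" using a by (simp add: field_simps)
    then show "ennreal (norm (norm x)) \<le> ennreal (1 / a) * ennreal (exp (a * norm x))"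
      using a by (simp add: ennreal_mult[symmetric] ennreal_leI)
  qed
  also have "\<dots> = ennreal (1 / a) * (\<integral>\<^sup>+x. ennreal (exp (a * norm x)) \<partial>\<mu>)"
    by (rule nn_integral_cmult) measurable
  also have "\<dots> < \<infinity>" using fin by (simp add: ennreal_mult_less_top)
  finally have "integrable \<mu> (\<lambda>x. norm x)" by (intro integrableI_bounded) auto
  then show ?thesis using p s by (simp add: P1_def)
qed

theorem lemma4p11:
  fixes A :: "real^'n^'n" and \<delta> \<omega> M \<alpha> \<alpha>0 c2 :: real
    and \<theta> :: "(real^'m) measure" and \<mu>0 :: "(real^'n) measure"
    and f :: "real^'n \<Rightarrow> (real^'n) measure \<Rightarrow> real^'m \<Rightarrow> real^'n"
  assumes theta: "prob_space \<theta>" "sets \<theta> = sets borel"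
    and f_meas: "\<And>\<mu>. P1 \<mu> \<Longrightarrow> (\<lambda>(x, z). f x \<mu> z) \<in> borel_measurable (borel \<Otimes>\<^sub>M borel)"
    and mu0: "P1 \<mu>0"
    and A3: "\<omega> > 0" "onorm ((*v) A) \<le> exp (- \<omega>)"
    and A6i: "M > 1" "AE z in \<theta>. Dlip f z \<le> ereal M"
    and A6ii: "\<alpha> > 0" "(\<integral>\<^sup>+ x. ennreal (exp (\<alpha> * norm x)) \<partial>\<mu>0) < \<infinity>"
      "(\<integral>\<^sup>+ z. ennreal (exp (\<alpha> * D1 f z)) \<partial>\<theta>) < \<infinity>"
    and delta: "\<delta> > 0" "\<delta> < (1 - exp (- \<omega>)) / (2 * M)"
    and alpha0: "0 < \<alpha>0" "\<alpha>0 \<le> \<alpha>"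
    and c2: "0 < c2"
    and hc2: "\<And>\<alpha>1. 0 \<le> \<alpha>1 \<Longrightarrow> \<alpha>1 \<le> \<alpha>0 \<Longrightarrow>
       (\<integral>\<^sup>+ z. ennreal (exp (\<alpha>1 * D1 f z)) \<partial>\<theta>) \<le> ennreal (exp (c2 * \<alpha>1))"
  shows "0 < exp (- \<omega>) + 2 * \<delta> * M \<and> exp (- \<omega>) + 2 * \<delta> * M < 1 \<and>
    (\<forall>\<alpha>1. 0 \<le> \<alpha>1 \<and> \<alpha>1 \<le> \<alpha>0 \<longrightarrow>
      (SUP n. \<integral>\<^sup>+ x. ennreal (exp (\<alpha>1 * norm x)) \<partial>((Psi A \<delta> f \<theta> ^^ n) \<mu>0))
        \<le> (\<integral>\<^sup>+ x. ennreal (exp (\<alpha>1 * norm x)) \<partial>\<mu>0)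
           * ennreal (exp (c2 * \<alpha>1 / (1 - (exp (- \<omega>) + 2 * \<delta> * M)))))"
proof -
  define k1 where "k1 = exp (- \<omega>) + 2 * \<delta> * M"
  have Mpos: "M > 0" using A6i by simp
  have e1: "exp (- \<omega>) < 1" using A3 by simp
  have "2 * M * \<delta> < 1 - exp (- \<omega>)" using delta(2) Mpos by (simp add: less_divide_eq mult.commute)
  then have k1lt: "k1 < 1" unfolding k1_def by (simp add: algebra_simps)
  have k1pos: "0 < k1" unfolding k1_def using delta Mpos by (simp add: add_pos_nonneg)
  have d1: "\<delta> \<le> 1"
  proof -
    have "1 - exp (- \<omega>) \<le> 2 * M" using A6i(1) exp_gt_zero[of "- \<omega>"] by linarith
    then have "(1 - exp (- \<omega>)) / (2 * M) \<le> 1" using Mpos by (simp add: divide_le_eq)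
    then show ?thesis using delta by simp
  qed
  have "0 < \<delta> * M" using delta Mpos by simp
  then have kap: "exp (- \<omega>) + \<delta> * M \<le> 1" using k1lt unfolding k1_def by linarith
  note stp = step[where A=A and \<delta>=\<delta> and \<omega>=\<omega> and M=M and \<alpha>z=\<alpha>0 and cc=c2 and \<theta>=\<theta> and f=f, OF theta(1) theta(2) f_meas A3(2) A6i(2) Mpos delta(1) d1 kap hc2]
  note PsiP = Psi_P[where A=A and \<delta>=\<delta> and \<omega>=\<omega> and M=M and \<alpha>z=\<alpha>0 and cc=c2 and \<theta>=\<theta> and f=f, OF theta(1) theta(2) f_meas A3(2) A6i(2) Mpos delta(1) d1 kap hc2]
  define \<mu>n where "\<mu>n n = (Psi A \<delta> f \<theta> ^^ n) \<mu>0" for n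
  define L where "L n a = (\<integral>\<^sup>+ x. ennreal (exp (a * norm x)) \<partial>\<mu>n n)" for n a
  define C where "C a = exp (c2 * a / (1 - k1))" for a
  have s0: "sets \<mu>0 = sets borel" and p0: "prob_space \<mu>0" using mu0 by (auto simp: P1_def)
  have L0fin: "L 0 a < \<infinity>" if "0 \<le> a" "a \<le> \<alpha>0" for a
  proof -
    have "L 0 a \<le> (\<integral>\<^sup>+ x. ennreal (exp (\<alpha> * norm x)) \<partial>\<mu>0)" unfolding L_def \<mu>n_def funpow_0
      using that alpha0 by (intro nn_integral_mono ennreal_leI) (auto intro!: mult_right_mono)
    then show ?thesis using A6ii(2) by (simp add: le_less_trans)
  qed
  have ell0: "1 \<le> (\<integral>x. exp (a * norm x) \<partial>\<mu>0)" if "0 \<le> a" "a \<le> \<alpha>0" for a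
  proof -
    interpret prob_space \<mu>0 by (rule p0)
    have I: "integrable \<mu>0 (\<lambda>x. exp (a * norm x))"
      using Lconv(1)[OF s0] L0fin[OF that] unfolding L_def \<mu>n_def by simp
    have "(\<integral>x. 1 \<partial>\<mu>0) \<le> (\<integral>x. exp (a * norm x) \<partial>\<mu>0)"
      by (intro integral_mono I) (use that in auto)
    then show ?thesis by (simp add: prob_space)
  qed
  have main: "P1 (\<mu>n n) \<and> (\<forall>a. 0 \<le> a \<and> a \<le> \<alpha>0 \<longrightarrow> L n a \<le> L 0 a * ennreal (C a))" for n
  proof (induction n)
    case 0
    have "L 0 a \<le> L 0 a * ennreal (C a)" if "0 \<le> a" for a
    proof -
      have "1 \<le> C a" unfolding C_def using that c2 k1lt by simp
      then have "L 0 a * 1 \<le> L 0 a * ennreal (C a)" by (intro mult_left_mono) auto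
      then show ?thesis by simp
    qed
    then show ?case using mu0 by (simp add: \<mu>n_def)
  next
    case (Suc n)
    have Pn: "P1 (\<mu>n n)" using Suc by simp
    have sn: "sets (\<mu>n n) = sets borel" using Pn by (simp add: P1_def)
    have nxt: "\<mu>n (Suc n) = Psi A \<delta> f \<theta> (\<mu>n n)" by (simp add: \<mu>n_def)
    have bnd: "L (Suc n) a \<le> L 0 a * ennreal (C a)" if a: "0 \<le> a" "a \<le> \<alpha>0" for a
    proof -
      have IH: "L n a \<le> L 0 a * ennreal (C a)" using Suc a by simp
      have fin0: "L 0 a < \<infinity>" by (rule L0fin[OF a])
      then have finn: "L n a < \<infinity>" using IH by (simp add: le_less_trans ennreal_mult_less_top)
      define ln where "ln = (\<integral>x. exp (a * norm x) \<partial>\<mu>n n)"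
      define l0 where "l0 = (\<integral>x. exp (a * norm x) \<partial>\<mu>0)"
      have Ln: "L n a = ennreal ln" unfolding ln_def L_def using Lconv(2)[OF sn] finn by (simp add: L_def)
      have L0: "L 0 a = ennreal l0" unfolding l0_def L_def using Lconv(2)[OF s0] fin0 by (simp add: L_def \<mu>n_def)
      have l01: "1 \<le> l0" unfolding l0_def by (rule ell0[OF a])
      have Cp: "0 < C a" by (simp add: C_def)
      have "ennreal ln \<le> ennreal (l0 * C a)" using IH Ln L0 l01 Cp by (simp add: ennreal_mult)
      then have lnle: "ln \<le> l0 * C a" using l01 Cp by (simp add: ennreal_le_iff)
      have ln0: "0 \<le> ln" unfolding ln_def by (rule integral_nonneg_AE) auto
      have "L (Suc n) a \<le> ennreal (ln powr k1 * exp (c2 * (a * \<delta>)))"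
        unfolding nxt L_def ln_def k1_def by (rule stp) (use Pn a finn in \<open>simp_all add: L_def\<close>)
      also have "ln powr k1 * exp (c2 * (a * \<delta>)) \<le> l0 * C a"
      proof -
        have "ln powr k1 \<le> (l0 * C a) powr k1" using lnle ln0 k1pos by (intro powr_mono2) auto
        also have "\<dots> = l0 powr k1 * C a powr k1" using l01 Cp by (simp add: powr_mult)
        also have "\<dots> \<le> l0 * C a powr k1"
        proof -
          have "l0 powr k1 \<le> l0 powr 1" using l01 k1lt by (intro powr_mono) auto
          then show ?thesis using l01 by (intro mult_right_mono) auto
        qed
        finally have 1: "ln powr k1 * exp (c2 * (a * \<delta>)) \<le> l0 * C a powr k1 * exp (c2 * (a * \<delta>))"
          by (intro mult_right_mono) auto
        have "C a powr k1 * exp (c2 * (a * \<delta>)) = exp (k1 * (c2 * a / (1 - k1)) + c2 * (a * \<delta>))"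
          by (simp add: C_def exp_powr_eq exp_add)
        also have "\<dots> \<le> C a"
        proof -
          have "c2 * (a * \<delta>) \<le> c2 * a" using c2 a d1 delta by (intro mult_left_mono) (auto intro: mult_left_le)
          also have "c2 * a = (1 - k1) * (c2 * a / (1 - k1))" using k1lt by simp
          finally have h: "c2 * (a * \<delta>) \<le> (1 - k1) * (c2 * a / (1 - k1))" .
          have "k1 * (c2 * a / (1 - k1)) + c2 * (a * \<delta>) \<le> k1 * (c2 * a / (1 - k1)) + (1 - k1) * (c2 * a / (1 - k1))"
            using h by linarith
          also have "\<dots> = c2 * a / (1 - k1)" by (simp add: algebra_simps add_divide_distrib[symmetric])
          finally have "k1 * (c2 * a / (1 - k1)) + c2 * (a * \<delta>) \<le> c2 * a / (1 - k1)" .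
          then show ?thesis unfolding C_def by simp
        qed
        finally have "C a powr k1 * exp (c2 * (a * \<delta>)) \<le> C a" .
        then have "l0 * C a powr k1 * exp (c2 * (a * \<delta>)) \<le> l0 * C a"
          using l01 by (simp add: mult.assoc mult_left_mono)
        with 1 show ?thesis by linarith
      qed
      then have "ennreal (ln powr k1 * exp (c2 * (a * \<delta>))) \<le> ennreal (l0 * C a)" by (rule ennreal_leI)
      also have "\<dots> = L 0 a * ennreal (C a)" using L0 l01 Cp by (simp add: ennreal_mult)
      finally show ?thesis .
    qed
    have "P1 (\<mu>n (Suc n))"
    proof (rule P1_from_exp[OF _ _ alpha0(1)])
      show "prob_space (\<mu>n (Suc n))" "sets (\<mu>n (Suc n)) = sets borel" unfolding nxt using PsiP Pn by auto
      have "L (Suc n) \<alpha>0 < \<infinity>"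
        using bnd[of \<alpha>0] L0fin[of \<alpha>0] alpha0 by (simp add: le_less_trans ennreal_mult_less_top)
      then show "(\<integral>\<^sup>+x. ennreal (exp (\<alpha>0 * norm x)) \<partial>\<mu>n (Suc n)) < \<infinity>" by (simp add: L_def)
    qed
    then show ?case using bnd by blast
  qed
  have "(SUP n. \<integral>\<^sup>+ x. ennreal (exp (a * norm x)) \<partial>((Psi A \<delta> f \<theta> ^^ n) \<mu>0))
        \<le> (\<integral>\<^sup>+ x. ennreal (exp (a * norm x)) \<partial>\<mu>0) * ennreal (exp (c2 * a / (1 - k1)))"
    if "0 \<le> a" "a \<le> \<alpha>0" for a
  proof (rule SUP_least)
    fix n
    show "(\<integral>\<^sup>+ x. ennreal (exp (a * norm x)) \<partial>((Psi A \<delta> f \<theta> ^^ n) \<mu>0))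
        \<le> (\<integral>\<^sup>+ x. ennreal (exp (a * norm x)) \<partial>\<mu>0) * ennreal (exp (c2 * a / (1 - k1)))"
      using main[of n] that unfolding L_def \<mu>n_def C_def by simp
  qed
  then show ?thesis using k1pos k1lt unfolding k1_def by auto
qed


end
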